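(* Let $k\ge 2$. For every deterministic algorithm that solves the $k$-ribbon problem on oriented line graphs of every length with identical agents (even when endpoints know they are endpoints), and for every $n$, there is an execution on a line of $n$ agents (some choice of starting agent) in which some agent has not decided its color before round $(2-\frac1k)n-3$.
   Context: Message passing model (1D): line of $n$ agents, synchronous rounds, reliable messages between neighbors, identical agents with a common sense of direction and no knowledge of $n$ or their position; initially only one arbitrary starting agent is awake and other agents wake upon receiving a message. The $k$-ribbon problem: every agent outputs a color in $\{1,\dots,k\}$ with each color class contiguous, colors increasing from left to right, and class sizes differing by at most $1$. *)

theory Defs
  imports Complex_Main
begin

text \<open>A deterministic distributed algorithm for identical agents on an oriented line. Agent positions are 0..n-1, 0 = leftmost.
  The two boolean flags tell an agent whether it has a left / right neighbour
  (so endpoints know they are endpoints).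
  - alg_init: state of the spontaneously awake starting agent at time 0;
  - alg_wake: state of a sleeping agent after it receives its first message(s)
      (messages from left / right neighbour, at least one present);
  - alg_send: messages an awake agent sends to its left / right neighbour in a round;
  - alg_trans: state update of an awake agent given received messages (left, right);
  - alg_out: decided colour (None = undecided).\<close>

record ('s, 'm) alg =
  alg_init  :: "bool \<Rightarrow> bool \<Rightarrow> 's"
  alg_wake  :: "bool \<Rightarrow> bool \<Rightarrow> 'm option \<Rightarrow> 'm option \<Rightarrow> 's"
  alg_send  :: "'s \<Rightarrow> 'm option \<times> 'm option"
  alg_trans :: "'s \<Rightarrow> 'm option \<Rightarrow> 'm option \<Rightarrow> 's"
  alg_out   :: "'s \<Rightarrow> nat option"

text \<open>Configuration: state of each agent, None = asleep.\<close>

definition msg_from_left :: "('s, 'm) alg \<Rightarrow> (nat \<Rightarrow> 's option) \<Rightarrow> nat \<Rightarrow> 'm option" where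
  "msg_from_left A c i =
     (if i = 0 then None else
      (case c (i - 1) of None \<Rightarrow> None | Some st \<Rightarrow> snd (alg_send A st)))"

definition msg_from_right :: "('s, 'm) alg \<Rightarrow> nat \<Rightarrow> (nat \<Rightarrow> 's option) \<Rightarrow> nat \<Rightarrow> 'm option" where
  "msg_from_right A n c i =
     (if i + 1 \<ge> n then None else
      (case c (i + 1) of None \<Rightarrow> None | Some st \<Rightarrow> fst (alg_send A st)))"

definition step :: "('s, 'm) alg \<Rightarrow> nat \<Rightarrow> (nat \<Rightarrow> 's option) \<Rightarrow> (nat \<Rightarrow> 's option)" where
  "step A n c = (\<lambda>i. if i < n then
      (let mL = msg_from_left A c i; mR = msg_from_right A n c i in
       case c i of
         Some st \<Rightarrow> Some (alg_trans A st mL mR)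
       | None \<Rightarrow> (if mL = None \<and> mR = None then None
                  else Some (alg_wake A (0 < i) (i + 1 < n) mL mR)))
    else None)"

fun run :: "('s, 'm) alg \<Rightarrow> nat \<Rightarrow> nat \<Rightarrow> nat \<Rightarrow> (nat \<Rightarrow> 's option)" where
  "run A n s 0 = (\<lambda>i. if i = s \<and> i < n then Some (alg_init A (0 < i) (i + 1 < n)) else None)"
| "run A n s (Suc t) = step A n (run A n s t)"

definition agent_output :: "('s, 'm) alg \<Rightarrow> nat \<Rightarrow> nat \<Rightarrow> nat \<Rightarrow> nat \<Rightarrow> nat option" where
  "agent_output A n s t i = (case run A n s t i of None \<Rightarrow> None | Some st \<Rightarrow> alg_out A st)"

text \<open>k-ribbon colouring of agents 0..n-1 (0 leftmost): colours in {1..k}, non-decreasing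
  left to right (hence each class contiguous and colours increasing), class sizes differ by
  at most one.\<close>

definition is_ribbon :: "nat \<Rightarrow> nat \<Rightarrow> (nat \<Rightarrow> nat) \<Rightarrow> bool" where
  "is_ribbon k n c \<longleftrightarrow>
     (\<forall>i<n. 1 \<le> c i \<and> c i \<le> k) \<and>
     (\<forall>i j. i \<le> j \<and> j < n \<longrightarrow> c i \<le> c j) \<and>
     (\<forall>a\<in>{1..k}. \<forall>b\<in>{1..k}.
        card {i. i < n \<and> c i = a} \<le> card {i. i < n \<and> c i = b} + 1)"

definition solves_ribbon :: "('s, 'm) alg \<Rightarrow> nat \<Rightarrow> bool" where
  "solves_ribbon A k \<longleftrightarrow>
     (\<forall>n s. 1 \<le> n \<and> s < n \<longrightarrow>
        (\<exists>c. is_ribbon k n c \<and>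
           (\<forall>i<n. (\<exists>t. agent_output A n s t i = Some (c i)) \<and>
                  (\<forall>t v. agent_output A n s t i = Some v \<longrightarrow> v = c i) \<and>
                  (\<forall>t. agent_output A n s t i \<noteq> None \<longrightarrow> agent_output A n s (Suc t) i \<noteq> None))))"

end

theory Submission
  imports Defs
begin

lemma run_none_far:
  "t < i \<Longrightarrow> run A n 0 t i = None"
proof (induction t arbitrary: i)
  case 0 then show ?case by simp
next
  case (Suc t)
  have l: "msg_from_left A (run A n 0 t) i = None"
    using Suc by (auto simp: msg_from_left_def split: option.splits)
  have r: "msg_from_right A n (run A n 0 t) i = None"
    using Suc by (auto simp: msg_from_right_def split: option.splits)
  show ?case using Suc l r by (simp add: step_def Let_def)
qed

lemma run_same:
  assumes "n \<le> n'"
  shows "i + t + 2 < 2 * n \<Longrightarrow> run A n 0 t i = run A n' 0 t i"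
proof (induction t arbitrary: i)
  case 0 then show ?case using assms by auto
next
  case (Suc t)
  show ?case
  proof (cases "Suc t < i")
    case True then show ?thesis by (metis run_none_far)
  next
    case False
    then have i1: "i + 1 < n" "i + 1 < n'" "i < n" "i < n'" using Suc.prems assms by auto
    have c: "run A n 0 t i = run A n' 0 t i" using Suc by auto
    have l: "msg_from_left A (run A n 0 t) i = msg_from_left A (run A n' 0 t) i"
    proof (cases "i = 0")
      case True then show ?thesis by (simp add: msg_from_left_def)
    next
      case False
      have "run A n 0 t (i - 1) = run A n' 0 t (i - 1)" using Suc False by auto
      then show ?thesis by (simp add: msg_from_left_def)
    qed
    have "run A n 0 t (i + 1) = run A n' 0 t (i + 1)" using Suc by auto
    then have r: "msg_from_right A n (run A n 0 t) i = msg_from_right A n' (run A n' 0 t) i"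
      using i1 by (simp add: msg_from_right_def)
    have b1: "(i + 1 < n) = True" "(i + 1 < n') = True" using i1 by auto
    show ?thesis using c l r i1 by (simp add: step_def Let_def split: option.splits)
  qed
qed

lemma ribbon_sum:
  fixes c :: "nat \<Rightarrow> nat"
  assumes "\<forall>j<n. 1 \<le> c j \<and> c j \<le> k"
  shows "n = (\<Sum>a\<in>{1..k}. card {j. j < n \<and> c j = a})"
proof -
  have e: "{..<n} = (\<Union>a\<in>{1..k}. {j. j < n \<and> c j = a})" using assms by auto
  have "card (\<Union>a\<in>{1..k}. {j. j < n \<and> c j = a}) = (\<Sum>a\<in>{1..k}. card {j. j < n \<and> c j = a})"
    by (rule card_UN_disjoint) auto
  then show ?thesis using e by (metis card_lessThan)
qed

lemma ribbon_bounds: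
  assumes "is_ribbon k n c" "k \<ge> 1"
  shows "k * card {j. j < n \<and> c j = 1} \<le> n + k - 1"
    and "n + 1 \<le> k * card {j. j < n \<and> c j = 1} + k"
proof -
  let ?f = "\<lambda>a. card {j. j < n \<and> c j = a}"
  let ?m = "?f 1"
  have rb: "\<forall>j<n. 1 \<le> c j \<and> c j \<le> k"
    and bal: "\<forall>a\<in>{1..k}. \<forall>b\<in>{1..k}. ?f a \<le> ?f b + 1"
    using assms(1) unfolding is_ribbon_def by auto
  have s: "n = (\<Sum>a\<in>{1..k}. ?f a)" using ribbon_sum[OF rb] .
  have sp: "(\<Sum>a\<in>{1..k}. ?f a) = ?m + (\<Sum>a\<in>{2..k}. ?f a)"
    using assms(2) by (simp add: sum.atLeast_Suc_atMost numeral_2_eq_2)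
  have k1: "card {2..k} = k - 1" by simp
  have "(\<Sum>a\<in>{2..k}. ?f a + 1) \<ge> (\<Sum>a\<in>{2..k}. ?m)"
    by (rule sum_mono) (use bal assms(2) in auto)
  moreover have "(\<Sum>a\<in>{2..k}. ?f a + 1) = (\<Sum>a\<in>{2..k}. ?f a) + (k - 1)"
    by (subst sum.distrib) (simp add: k1)
  ultimately have A: "(\<Sum>a\<in>{2..k}. ?f a) + (k - 1) \<ge> (k - 1) * ?m"
    by simp
  have "(\<Sum>a\<in>{2..k}. ?f a) \<le> (\<Sum>a\<in>{2..k}. ?m + 1)"
    by (rule sum_mono) (use bal assms(2) in auto)
  then have B: "(\<Sum>a\<in>{2..k}. ?f a) \<le> (k - 1) * (?m + 1)"
    by (simp add: k1)
  obtain k' where k': "k = Suc k'" using assms(2) by (cases k) auto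
  show "k * ?m \<le> n + k - 1" using s sp A unfolding k' by (simp add: algebra_simps)
  show "n + 1 \<le> k * ?m + k" using s sp B unfolding k' by (simp add: algebra_simps)
qed

lemma color_not1:
  assumes "is_ribbon k n c" "k \<ge> 1" "i < n" "n \<le> k * i"
  shows "c i \<noteq> 1"
proof
  assume c1: "c i = 1"
  have mono: "\<forall>j j'. j \<le> j' \<and> j' < n \<longrightarrow> c j \<le> c j'"
    and rb: "\<forall>j<n. 1 \<le> c j \<and> c j \<le> k" using assms(1) unfolding is_ribbon_def by auto
  have "{..i} \<subseteq> {j. j < n \<and> c j = 1}"
  proof
    fix j assume "j \<in> {..i}"
    then have "j \<le> i" by simp
    then have "c j \<le> 1" "1 \<le> c j" using mono rb assms(3) c1 by force+
    then show "j \<in> {j. j < n \<and> c j = 1}" using \<open>j \<le> i\<close> assms(3) by auto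
  qed
  then have "Suc i \<le> card {j. j < n \<and> c j = 1}"
    by (metis card_atMost card_mono finite_Collect_conjI finite_Collect_less_nat)
  then have "k * Suc i \<le> n + k - 1" using ribbon_bounds(1)[OF assms(1,2)]
    by (meson le_trans mult_le_mono2)
  then have "k * i + k \<le> n + k - 1" by (simp add: algebra_simps)
  then show False using assms(2,4) by linarith
qed

lemma color_1:
  assumes "is_ribbon k n c" "k \<ge> 1" "i < n" "k * i + k \<le> n"
  shows "c i = 1"
proof (rule ccontr)
  assume c1: "c i \<noteq> 1"
  have mono: "\<forall>j j'. j \<le> j' \<and> j' < n \<longrightarrow> c j \<le> c j'"
    and rb: "\<forall>j<n. 1 \<le> c j \<and> c j \<le> k" using assms(1) unfolding is_ribbon_def by auto
  have "{j. j < n \<and> c j = 1} \<subseteq> {..<i}"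
  proof
    fix j assume j: "j \<in> {j. j < n \<and> c j = 1}"
    show "j \<in> {..<i}"
    proof (rule ccontr)
      assume "j \<notin> {..<i}"
      then have "i \<le> j" by simp
      then have "c i \<le> c j" using mono j by blast
      then show False using j c1 rb assms(3) by force
    qed
  qed
  then have "card {j. j < n \<and> c j = 1} \<le> i"
    by (metis card_lessThan card_mono finite_lessThan)
  then have "k * card {j. j < n \<and> c j = 1} \<le> k * i" by (rule mult_le_mono2)
  then show False using ribbon_bounds(2)[OF assms(1,2)] assms(4) by linarith
qed

theorem theorem7:
  fixes A :: "('s, 'm) alg" and k n :: nat
  assumes "k \<ge> 2" and "solves_ribbon A k" and "n \<ge> 1"
  shows "\<exists>s<n. \<exists>i<n. \<forall>t. real t < (2 - 1 / real k) * real n - 3 \<longrightarrow> agent_output A n s t i = None"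
proof (cases "n = 1")
  case True
  have "1 / real k > 0" using assms(1) by simp
  moreover have "(2 - 1 / real k) * real n - 3 = - 1 - 1 / real k" using True by simp
  ultimately have "(2 - 1 / real k) * real n - 3 < 0" by linarith
  then show ?thesis using True by (intro exI[of _ 0]) auto
next
  case False
  then have n2: "n \<ge> 2" using assms(3) by simp
  define i where "i = (n + k - 1) div k"
  have kpos: "k > 0" using assms(1) by simp
  have ki1: "k * i \<le> n + k - 1" unfolding i_def by (simp add: div_mult_self1_is_m mult.commute
        times_div_less_eq_dividend)
  have ki2: "n \<le> k * i"
  proof -
    have "(n + k - 1) mod k < k" using kpos by simp
    moreover have "k * i + (n + k - 1) mod k = n + k - 1" unfolding i_def by simp
    ultimately show ?thesis by linarith
  qed
  have iln: "i < n"
  proof -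
    have "k * i \<le> n + k - 1" by (rule ki1)
    moreover have "n + k - 1 < k * n" using n2 assms(1)
    proof -
      have "k * n = k * (n - 1) + k" using n2 by (simp add: algebra_simps)
      moreover have "k * (n - 1) \<ge> 2 * (n - 1)" using assms(1) by simp
      ultimately show ?thesis using n2 by linarith
    qed
    ultimately have "k * i < k * n" by linarith
    then show ?thesis by simp
  qed
  have main: "\<forall>t. real t < (2 - 1 / real k) * real n - 3 \<longrightarrow> agent_output A n 0 t i = None"
  proof (intro allI impI)
    fix t assume tb: "real t < (2 - 1 / real k) * real n - 3"
    have "real (k * i) \<le> real (n + k - 1)" using ki1 by (simp only: of_nat_le_iff)
    moreover have "real (n + k - 1) = real n + real k - 1" using kpos by (simp add: of_nat_diff)
    ultimately have "real k * real i \<le> real n + real k - 1" by simp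
    then have "real i \<le> (real n + real k - 1) / real k" using kpos
      by (simp add: field_simps)
    also have "\<dots> = real n / real k + 1 - 1 / real k" using kpos by (simp add: field_simps)
    finally have ib: "real i \<le> real n / real k + 1 - 1 / real k" .
    have "(2 - 1 / real k) * real n = 2 * real n - real n / real k" by (simp add: field_simps)
    then have "real t + real i + 2 < 2 * real n - 1 / real k" using tb ib by linarith
    moreover have "1 / real k > 0" using kpos by simp
    ultimately have "real t + real i + 2 < 2 * real n" by linarith
    then have "real (i + t + 2) < real (2 * n)" by simp
    then have close: "i + t + 2 < 2 * n" by linarith
    define n' where "n' = k * i + 2 * k"
    have nn': "n \<le> n'" using ki2 unfolding n'_def by simp
    have same: "run A n 0 t i = run A n' 0 t i" using run_same[OF nn' close] .
    show "agent_output A n 0 t i = None"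
    proof (rule ccontr)
      assume "agent_output A n 0 t i \<noteq> None"
      then obtain v where v: "agent_output A n 0 t i = Some v" by auto
      then have v': "agent_output A n' 0 t i = Some v" using same by (simp add: agent_output_def)
      have SR: "\<And>m. 1 \<le> m \<and> 0 < m \<Longrightarrow> (\<exists>c. is_ribbon k m c \<and>
           (\<forall>i<m. (\<exists>t. agent_output A m 0 t i = Some (c i)) \<and>
                  (\<forall>t v. agent_output A m 0 t i = Some v \<longrightarrow> v = c i) \<and>
                  (\<forall>t. agent_output A m 0 t i \<noteq> None \<longrightarrow> agent_output A m 0 (Suc t) i \<noteq> None)))"
        using assms(2) unfolding solves_ribbon_def by blast
      have "1 \<le> n \<and> 0 < n" using n2 by simp
      from SR[OF this] obtain c where c0: "is_ribbon k n c" "\<forall>i<n. (\<exists>t. agent_output A n 0 t i = Some (c i)) \<and>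
                  (\<forall>t v. agent_output A n 0 t i = Some v \<longrightarrow> v = c i) \<and>
                  (\<forall>t. agent_output A n 0 t i \<noteq> None \<longrightarrow> agent_output A n 0 (Suc t) i \<noteq> None)"
        by blast
      have c: "is_ribbon k n c" "\<forall>t v. agent_output A n 0 t i = Some v \<longrightarrow> v = c i"
        using c0 iln by auto
      have "1 \<le> n'" "0 < n'" "i < n'" using nn' n2 iln by auto
      then have "1 \<le> n' \<and> 0 < n'" by simp
      from SR[OF this] obtain c' where c0': "is_ribbon k n' c'" "\<forall>i<n'. (\<exists>t. agent_output A n' 0 t i = Some (c' i)) \<and>
                  (\<forall>t v. agent_output A n' 0 t i = Some v \<longrightarrow> v = c' i) \<and>
                  (\<forall>t. agent_output A n' 0 t i \<noteq> None \<longrightarrow> agent_output A n' 0 (Suc t) i \<noteq> None)"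
        by blast
      have c': "is_ribbon k n' c'" "\<forall>t v. agent_output A n' 0 t i = Some v \<longrightarrow> v = c' i"
        using c0' \<open>i < n'\<close> by auto
      have "c i \<noteq> 1" using color_not1[OF c(1) _ iln ki2] kpos by simp
      moreover have "c' i = 1" using color_1[OF c'(1) _ \<open>i < n'\<close>] kpos unfolding n'_def by simp
      moreover have "v = c i" using c(2) v by blast
      moreover have "v = c' i" using c'(2) v' by blast
      ultimately show False by simp
    qed
  qed
  have "0 < n" using n2 by simp
  then show ?thesis using iln main by blast
qed

end
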